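(* Under the standing assumptions below, for every $x\in\mathcal X$, $s\in\mathcal S$, $\gamma\in\mathbb R^I_+$, the function $\tilde D$ satisfies $$\tilde D(\gamma,x,s)=\sup_{a\in\tilde{\mathcal A}(x,s)}\ \inf_{\lambda\in\mathbb R^I_+}\Big[r(x,a,s)+\sum_{i=1}^I\big(\gamma^ig^i(x,a,s)+\lambda^i(g^i(x,a,s)-\bar g^i)\big)+\beta\,\mathbb E_s\tilde D(\gamma+\lambda,x',s')\Big],\quad x'=\zeta(x,a,s).$$
   Context: Setup. Let $\mathcal S$ be a finite set and $(s_t)_{t\ge0}$ a Markov chain on $\mathcal S$ with transition probabilities $\pi(s'|s)>0$ for all $s,s'\in\mathcal S$; for a shock history $s^t=(s_0,\dots,s_t)\in\mathcal S^{t+1}$ write $\pi^t(s^t|s_0)$ for its probability given $s_0$, and $\mathbb E_{s_t}$ (equivalently $\mathbb E_{s^t}$) for expectation over future shocks conditional on the history $s^t$. Let $\mathcal A\subset\mathbb R^n$ be a finite set, $\mathcal X\subseteq\mathbb R^m$ a countable set, $\zeta:\mathcal X\times\mathcal A\times\mathcal S\to\mathcal X$, $p:\mathcal X\times\mathcal A\times\mathcal S\to\mathbb R$, $r,g^1,\dots,g^I:\mathcal X\times\mathcal A\times\mathcal S\to\mathbb R$ bounded functions, $\bar g^1,\dots,\bar g^I\in\mathbb R$ constants and $\beta\in(0,1)$. A plan is a family $a=(a(s^t))_{t\ge0,\,s^t\in\mathcal S^{t+1}}$ with $a(s^t)\in\mathcal A$; given $x_0\in\mathcal X$ it induces states $x(s^0)=x_0$,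 $x(s^{t+1})=\zeta(x(s^t),a(s^t),s_t)$. Let $\tilde{\mathcal A}(x,s)=\{a\in\mathcal A:p(x,a,s)\ge0\}$ and let $\tilde{\mathcal A}^\infty(x_0)$ be the set of plans with $a(s^t)\in\tilde{\mathcal A}(x(s^t),s_t)$ for all $t,s^t$. A plan is feasible for $(x_0,s_0)$ if it lies in $\tilde{\mathcal A}^\infty(x_0)$ and satisfies the forward-looking constraints $\mathbb E_{s_t}\sum_{n=0}^\infty\beta^ng^i(x(s^{t+n}),a(s^{t+n}),s_{t+n})\ge\bar g^i$ for all $t$, $s^t$, $i$. Standing assumption: for every $x_0\in\mathcal X$, $s_0\in\mathcal S$ a feasible plan exists. Post-action histories: $\tilde{\mathcal H}^t=\mathcal S^{t+1}\times\mathcal A^{t+1}$ with elements $\tilde h^t=(s_0,a_0,\dots,s_t,a_t)$; along $s^t$ a plan generates $\tilde h^t=(s_0,a(s^0),\dots,s_t,a(s^t))$. $\tilde\Lambda$ is the set of families $(\lambda^i(\tilde h^t))_{t,\tilde h^t\in\tilde{\mathcal H}^t,i}$ with $\lambda^i(\tilde h^t)\ge0$ and $\sum_t\sum_{\tilde h^t}\sum_i\beta^t\lambda^i(\tilde h^t)\pi^t(s^t|s_0)<\infty$. For $\gamma\in\mathbb R^I_+$, $\tilde L(a,\lambda;\gamma,x_0,s_0)=\mathbb E_{s_0}\sum_{t\ge0}\beta^t\Big[r(x(s^t),a(s^t),s_t)+\sum_i\gamma^ig^i(x(s^t),a(s^t),s_t)+\sum_i\lambda^i(\tilde h^t)\Big(\sum_{n\ge0}\beta^ng^i(x(s^{t+n}),a(s^{t+n}),s_{t+n})-\bar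 g^i\Big)\Big]$ with $\tilde h^t$ generated by the plan, and $\tilde D(\gamma,x_0,s_0)=\inf_{\lambda\in\tilde\Lambda}\sup_{a\in\tilde{\mathcal A}^\infty(x_0)}\tilde L(a,\lambda;\gamma,x_0,s_0)$. *)

theory Defs
  imports Complex_Main "HOL-Library.Extended_Real" "HOL-Library.Countable_Set"
begin

text \<open>Transition probabilities: Pr s s' = pi(s' | s).
  A shock history s^t = (s_0,...,s_t) is a list of length t+1.
  Actions: an abstract type 'act with the finite action set Act.
  Constraint index set {1..I}: a finite type 'i; gamma, lambda in R^I_+ are
  functions 'i => real with nonnegative values.
  A plan is a function from (nonempty) shock histories to actions.\<close>

definition hprob :: "('s \<Rightarrow> 's \<Rightarrow> real) \<Rightarrow> 's \<Rightarrow> 's list \<Rightarrow> real" where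
  "hprob Pr s0 h =
     (if h \<noteq> [] \<and> hd h = s0 then (\<Prod>k<length h - 1. Pr (h ! k) (h ! Suc k)) else 0)"

definition cexp :: "('s \<Rightarrow> 's \<Rightarrow> real) \<Rightarrow> 's list \<Rightarrow> nat \<Rightarrow> ('s list \<Rightarrow> real) \<Rightarrow> real" where
  "cexp Pr h n f = (\<Sum>e\<in>{e. length e = n}. hprob Pr (last h) (last h # e) * f (h @ e))"

primrec st_aux :: "('x \<Rightarrow> 'act \<Rightarrow> 's \<Rightarrow> 'x) \<Rightarrow> ('s list \<Rightarrow> 'act) \<Rightarrow> 'x \<Rightarrow> 's list \<Rightarrow> nat \<Rightarrow> 'x" where
  "st_aux zeta a x0 h 0 = x0"
| "st_aux zeta a x0 h (Suc k) = zeta (st_aux zeta a x0 h k) (a (take (Suc k) h)) (h ! k)"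

definition xst :: "('x \<Rightarrow> 'act \<Rightarrow> 's \<Rightarrow> 'x) \<Rightarrow> ('s list \<Rightarrow> 'act) \<Rightarrow> 'x \<Rightarrow> 's list \<Rightarrow> 'x" where
  "xst zeta a x0 h = st_aux zeta a x0 h (length h - 1)"

definition phist :: "('s list \<Rightarrow> 'act) \<Rightarrow> 's list \<Rightarrow> ('s \<times> 'act) list" where
  "phist a h = map (\<lambda>k. (h ! k, a (take (Suc k) h))) [0..<length h]"

definition flow :: "('x \<Rightarrow> 'act \<Rightarrow> 's \<Rightarrow> 'x) \<Rightarrow> ('s list \<Rightarrow> 'act) \<Rightarrow> 'x \<Rightarrow>
    ('x \<Rightarrow> 'act \<Rightarrow> 's \<Rightarrow> real) \<Rightarrow> 's list \<Rightarrow> real" where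
  "flow zeta a x0 f h = f (xst zeta a x0 h) (a h) (last h)"

definition contval :: "('s \<Rightarrow> 's \<Rightarrow> real) \<Rightarrow> real \<Rightarrow> ('x \<Rightarrow> 'act \<Rightarrow> 's \<Rightarrow> 'x) \<Rightarrow>
    ('s list \<Rightarrow> 'act) \<Rightarrow> 'x \<Rightarrow> ('x \<Rightarrow> 'act \<Rightarrow> 's \<Rightarrow> real) \<Rightarrow> 's list \<Rightarrow> real" where
  "contval Pr beta zeta a x0 f h = (\<Sum>n. beta ^ n * cexp Pr h n (flow zeta a x0 f))"

definition plans :: "'act set \<Rightarrow> ('x \<Rightarrow> 'act \<Rightarrow> 's \<Rightarrow> 'x) \<Rightarrow> ('x \<Rightarrow> 'act \<Rightarrow> 's \<Rightarrow> real) \<Rightarrow>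
    'x \<Rightarrow> ('s list \<Rightarrow> 'act) set" where
  "plans Act zeta p x0 =
     {a. \<forall>h. h \<noteq> [] \<longrightarrow> a h \<in> Act \<and> p (xst zeta a x0 h) (a h) (last h) \<ge> 0}"

definition feasible :: "('s \<Rightarrow> 's \<Rightarrow> real) \<Rightarrow> real \<Rightarrow> 'act set \<Rightarrow> ('x \<Rightarrow> 'act \<Rightarrow> 's \<Rightarrow> 'x) \<Rightarrow>
    ('x \<Rightarrow> 'act \<Rightarrow> 's \<Rightarrow> real) \<Rightarrow> ('i \<Rightarrow> 'x \<Rightarrow> 'act \<Rightarrow> 's \<Rightarrow> real) \<Rightarrow> ('i \<Rightarrow> real) \<Rightarrow>
    'x \<Rightarrow> 's \<Rightarrow> ('s list \<Rightarrow> 'act) \<Rightarrow> bool" where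
  "feasible Pr beta Act zeta p g gbar x0 s0 a \<longleftrightarrow>
     a \<in> plans Act zeta p x0 \<and>
     (\<forall>h i. h \<noteq> [] \<and> hd h = s0 \<longrightarrow> contval Pr beta zeta a x0 (g i) h \<ge> gbar i)"

definition mults :: "('s \<Rightarrow> 's \<Rightarrow> real) \<Rightarrow> real \<Rightarrow> 'act set \<Rightarrow> 's \<Rightarrow>
    (('s \<times> 'act) list \<Rightarrow> 'i::finite \<Rightarrow> real) set" where
  "mults Pr beta Act s0 =
     {lam. (\<forall>ht i. lam ht i \<ge> 0) \<and>
       summable (\<lambda>t. beta ^ t *
          (\<Sum>ht\<in>{ht. length ht = Suc t \<and> set ht \<subseteq> UNIV \<times> Act}.
              \<Sum>i\<in>UNIV. lam ht i * hprob Pr s0 (map fst ht)))}"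

text \<open>The expectation
  E_{s0} of the t-th summand is taken over s^t; the term involving the future
  sum is expressed through its conditional expectation given s^t.\<close>
definition lagr :: "('s \<Rightarrow> 's \<Rightarrow> real) \<Rightarrow> real \<Rightarrow> ('x \<Rightarrow> 'act \<Rightarrow> 's \<Rightarrow> 'x) \<Rightarrow>
    ('x \<Rightarrow> 'act \<Rightarrow> 's \<Rightarrow> real) \<Rightarrow> ('i::finite \<Rightarrow> 'x \<Rightarrow> 'act \<Rightarrow> 's \<Rightarrow> real) \<Rightarrow> ('i \<Rightarrow> real) \<Rightarrow>
    ('s list \<Rightarrow> 'act) \<Rightarrow> (('s \<times> 'act) list \<Rightarrow> 'i \<Rightarrow> real) \<Rightarrow> ('i \<Rightarrow> real) \<Rightarrow> 'x \<Rightarrow> 's \<Rightarrow> real" where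
  "lagr Pr beta zeta r g gbar a lam gam x0 s0 =
     (\<Sum>t. beta ^ t * cexp Pr [s0] t (\<lambda>h.
         flow zeta a x0 r h
         + (\<Sum>i\<in>UNIV. gam i * flow zeta a x0 (g i) h)
         + (\<Sum>i\<in>UNIV. lam (phist a h) i * (contval Pr beta zeta a x0 (g i) h - gbar i))))"

definition Dtil :: "('s \<Rightarrow> 's \<Rightarrow> real) \<Rightarrow> real \<Rightarrow> 'act set \<Rightarrow> ('x \<Rightarrow> 'act \<Rightarrow> 's \<Rightarrow> 'x) \<Rightarrow>
    ('x \<Rightarrow> 'act \<Rightarrow> 's \<Rightarrow> real) \<Rightarrow> ('x \<Rightarrow> 'act \<Rightarrow> 's \<Rightarrow> real) \<Rightarrow>
    ('i::finite \<Rightarrow> 'x \<Rightarrow> 'act \<Rightarrow> 's \<Rightarrow> real) \<Rightarrow> ('i \<Rightarrow> real) \<Rightarrow>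
    ('i \<Rightarrow> real) \<Rightarrow> 'x \<Rightarrow> 's \<Rightarrow> ereal" where
  "Dtil Pr beta Act zeta p r g gbar gam x0 s0 =
     (INF lam\<in>mults Pr beta Act s0. SUP a\<in>plans Act zeta p x0.
        ereal (lagr Pr beta zeta r g gbar a lam gam x0 s0))"

end

theory Submission
  imports Defs
begin


lemma finite_len: "finite {e::'s::finite list. length e = n}"
  using finite_lists_length_eq[of "UNIV::'s set" n] by simp

lemma hprob_single[simp]: "hprob Pr s0 [s0] = 1"
  by (simp add: hprob_def)

lemma hprob_Nil[simp]: "hprob Pr s0 [] = 0"
  by (simp add: hprob_def)

lemma hprob_Cons2: "hprob Pr s0 (s0 # s' # e) = Pr s0 s' * hprob Pr s' (s' # e)"
  unfolding hprob_def by (simp del: prod.lessThan_Suc add: prod.lessThan_Suc_shift)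

lemma hprob_Cons_ne: "s1 \<noteq> s0 \<Longrightarrow> hprob Pr s0 (s1 # e) = 0"
  by (simp add: hprob_def)

lemma hprob_nonneg: "(\<And>a b. Pr a b > 0) \<Longrightarrow> hprob Pr s0 h \<ge> 0"
  unfolding hprob_def by (auto intro!: prod_pos less_imp_le)

lemma set_len_Suc: "{e::'a list. length e = Suc n} = (\<lambda>(s, e). s # e) ` (UNIV \<times> {e. length e = n})"
proof -
  have "e \<in> (\<lambda>(s, e). s # e) ` (UNIV \<times> {e. length e = n})" if "length e = Suc n" for e
    using that by (cases e) auto
  then show ?thesis by auto
qed

lemma cexp_0[simp]: "cexp Pr h 0 f = f h"
proof -
  have "{e::'a list. length e = 0} = {[]}" by auto
  then show ?thesis by (simp add: cexp_def)
qed

lemma cexp_Suc: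
  fixes s0 :: "'s::finite"
  shows "cexp Pr [s0] (Suc t) f = (\<Sum>s'\<in>UNIV. Pr s0 s' * cexp Pr [s'] t (\<lambda>h. f (s0 # h)))"
proof -
  have inj: "inj_on (\<lambda>(s::'s, e). s # e) (UNIV \<times> {e. length e = t})"
    by (auto simp: inj_on_def)
  have "cexp Pr [s0] (Suc t) f = (\<Sum>e\<in>{e. length e = Suc t}. hprob Pr s0 (s0 # e) * f (s0 # e))"
    by (simp add: cexp_def)
  also have "\<dots> = (\<Sum>(s', e)\<in>UNIV \<times> {e. length e = t}. hprob Pr s0 (s0 # s' # e) * f (s0 # s' # e))"
    unfolding set_len_Suc by (subst sum.reindex[OF inj]) (simp add: case_prod_unfold)
  also have "\<dots> = (\<Sum>s'\<in>UNIV. \<Sum>e\<in>{e. length e = t}. hprob Pr s0 (s0 # s' # e) * f (s0 # s' # e))"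
    by (subst sum.cartesian_product[symmetric]) simp
  also have "\<dots> = (\<Sum>s'\<in>UNIV. Pr s0 s' * cexp Pr [s'] t (\<lambda>h. f (s0 # h)))"
    by (simp add: cexp_def hprob_Cons2 sum_distrib_left mult.assoc)
  finally show ?thesis .
qed

lemma cexp_Cons: "h \<noteq> [] \<Longrightarrow> cexp Pr (s # h) n f = cexp Pr h n (\<lambda>k. f (s # k))"
  by (simp add: cexp_def)

lemma cexp_cong: "(\<And>e. length e = n \<Longrightarrow> f (h @ e) = f' (h @ e)) \<Longrightarrow> cexp Pr h n f = cexp Pr h n f'"
  unfolding cexp_def by (rule sum.cong) auto

lemma cexp_add: "cexp Pr h n (\<lambda>k. f k + f' k) = cexp Pr h n f + cexp Pr h n f'"
  unfolding cexp_def by (simp add: distrib_left sum.distrib)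

lemma cexp_sum: "cexp Pr h n (\<lambda>k. \<Sum>i\<in>I. f i k) = (\<Sum>i\<in>I. cexp Pr h n (f i))"
  unfolding cexp_def by (simp add: sum_distrib_left sum.swap[of _ I])

lemma cexp_cmult: "cexp Pr h n (\<lambda>k. c * f k) = c * cexp Pr h n f"
  unfolding cexp_def by (simp add: sum_distrib_left mult.left_commute)

lemma cexp_zero: "cexp Pr h n (\<lambda>k. 0) = 0"
  unfolding cexp_def by simp

section \<open>Plans and histories\<close>

definition shift :: "('s list \<Rightarrow> 'act) \<Rightarrow> 's \<Rightarrow> 's list \<Rightarrow> 'act" where
  "shift a s = (\<lambda>h. a (s # h))"

definition shiftl :: "(('s \<times> 'act) list \<Rightarrow> 'i \<Rightarrow> real) \<Rightarrow> ('s \<times> 'act) \<Rightarrow> ('s \<times> 'act) list \<Rightarrow> 'i \<Rightarrow> real" where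
  "shiftl lam sa = (\<lambda>ht. lam (sa # ht))"

lemma st_aux_cong:
  "(\<And>k. k < n \<Longrightarrow> a (take (Suc k) h) = b (take (Suc k) h)) \<Longrightarrow> st_aux zeta a x0 h n = st_aux zeta b x0 h n"
  by (induction n) auto

lemma xst_cong:
  assumes "h \<noteq> []" "\<And>h'. h' \<noteq> [] \<Longrightarrow> hd h' = hd h \<Longrightarrow> a h' = b h'"
  shows "xst zeta a x0 h = xst zeta b x0 h"
  unfolding xst_def
proof (rule st_aux_cong)
  fix k assume "k < length h - 1"
  then show "a (take (Suc k) h) = b (take (Suc k) h)"
    using assms by (intro assms(2)) (auto simp: hd_take neq_Nil_conv)
qed

lemma st_aux_Cons:
  "st_aux zeta a x0 (s # h) (Suc n) = st_aux zeta (shift a s) (zeta x0 (a [s]) s) h n"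
  by (induction n) (auto simp: shift_def)

lemma xst_Cons: "h \<noteq> [] \<Longrightarrow> xst zeta a x0 (s # h) = xst zeta (shift a s) (zeta x0 (a [s]) s) h"
  unfolding xst_def using st_aux_Cons[of zeta a x0 s h "length h - 1"] by (cases h) auto

lemma xst_single[simp]: "xst zeta a x0 [s] = x0"
  by (simp add: xst_def)

lemma flow_Cons: "h \<noteq> [] \<Longrightarrow> flow zeta a x0 f (s # h) = flow zeta (shift a s) (zeta x0 (a [s]) s) f h"
  by (simp add: flow_def xst_Cons shift_def)

lemma flow_single[simp]: "flow zeta a x0 f [s] = f x0 (a [s]) s"
  by (simp add: flow_def)

lemma phist_Cons: "phist a (s # h) = (s, a [s]) # phist (shift a s) h"
  unfolding phist_def shift_def by (simp add: upt_conv_Cons map_Suc_upt[symmetric] del: upt_Suc)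

lemma phist_single[simp]: "phist a [s] = [(s, a [s])]"
  by (simp add: phist_def)

lemma map_fst_phist[simp]: "map fst (phist a h) = h"
  unfolding phist_def by (simp add: comp_def map_nth[unfolded comp_def])

lemma length_phist[simp]: "length (phist a h) = length h"
  by (simp add: phist_def)

lemma set_phist: "set (phist a h) \<subseteq> UNIV \<times> {a (take (Suc k) h) |k. k < length h}"
  unfolding phist_def by auto

lemma phist_cong:
  assumes "h \<noteq> []" "\<And>h'. h' \<noteq> [] \<Longrightarrow> hd h' = hd h \<Longrightarrow> a h' = b h'"
  shows "phist a h = phist b h"
  unfolding phist_def using assms by (auto simp: hd_take neq_Nil_conv)

lemma flow_cong:
  assumes "h \<noteq> []" "\<And>h'. h' \<noteq> [] \<Longrightarrow> hd h' = hd h \<Longrightarrow> a h' = b h'"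
  shows "flow zeta a x0 f h = flow zeta b x0 f h"
proof -
  have "xst zeta a x0 h = xst zeta b x0 h" by (rule xst_cong[OF assms])
  then show ?thesis unfolding flow_def using assms(1) assms(2)[of h] by simp
qed

lemma contval_cong:
  assumes "h \<noteq> []" "\<And>h'. h' \<noteq> [] \<Longrightarrow> hd h' = hd h \<Longrightarrow> a h' = b h'"
  shows "contval Pr beta zeta a x0 f h = contval Pr beta zeta b x0 f h"
  unfolding contval_def
proof (intro arg_cong[where f=suminf] ext arg_cong2[where f="(*)"] refl cexp_cong)
  fix n and e :: "'a list"
  show "flow zeta a x0 f (h @ e) = flow zeta b x0 f (h @ e)"
    by (rule flow_cong) (use assms in auto)
qed

lemma contval_Cons:
  "h \<noteq> [] \<Longrightarrow> contval Pr beta zeta a x0 f (s # h) = contval Pr beta zeta (shift a s) (zeta x0 (a [s]) s) f h"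
proof -
  assume h: "h \<noteq> []"
  have "cexp Pr h n (\<lambda>k. flow zeta a x0 f (s # k)) = cexp Pr h n (flow zeta (shift a s) (zeta x0 (a [s]) s) f)" for n
    by (rule cexp_cong) (simp add: flow_Cons h)
  then show ?thesis unfolding contval_def by (simp add: cexp_Cons h)
qed


locale dp =
  fixes Pr :: "'s::finite \<Rightarrow> 's \<Rightarrow> real"
    and beta :: real
    and Act :: "'act set"
    and X :: "'x set"
    and zeta :: "'x \<Rightarrow> 'act \<Rightarrow> 's \<Rightarrow> 'x"
    and p r :: "'x \<Rightarrow> 'act \<Rightarrow> 's \<Rightarrow> real"
    and g :: "'i::finite \<Rightarrow> 'x \<Rightarrow> 'act \<Rightarrow> 's \<Rightarrow> real"
    and gbar :: "'i \<Rightarrow> real"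
  assumes Pr_pos: "\<And>s s'. Pr s s' > 0"
    and Pr_sum: "\<And>s. (\<Sum>s'\<in>UNIV. Pr s s') = 1"
    and Act_fin: "finite Act"
    and zeta_X: "\<And>x a s. x \<in> X \<Longrightarrow> a \<in> Act \<Longrightarrow> zeta x a s \<in> X"
    and beta0: "0 < beta" and beta1: "beta < 1"
    and r_bdd: "\<exists>B. \<forall>x\<in>X. \<forall>a\<in>Act. \<forall>s. \<bar>r x a s\<bar> \<le> B"
    and g_bdd: "\<And>i. \<exists>B. \<forall>x\<in>X. \<forall>a\<in>Act. \<forall>s. \<bar>g i x a s\<bar> \<le> B"
    and feas: "\<And>x0 s0. x0 \<in> X \<Longrightarrow> \<exists>a. feasible Pr beta Act zeta p g gbar x0 s0 a"
begin

lemma hpos: "hprob Pr s0 h \<ge> 0"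
  by (rule hprob_nonneg[OF Pr_pos])

lemma Pr_le1: "Pr s s' \<le> 1"
proof -
  have "Pr s s' \<le> (\<Sum>s'\<in>UNIV. Pr s s')"
    by (rule member_le_sum) (auto intro: less_imp_le Pr_pos)
  then show ?thesis using Pr_sum by simp
qed

lemma cexp_one_single: "cexp Pr [s0] n (\<lambda>_. 1) = 1"
proof (induction n arbitrary: s0)
  case 0 then show ?case by simp
next
  case (Suc n) then show ?case by (simp add: cexp_Suc Pr_sum)
qed

lemma cexp_one: "cexp Pr h n (\<lambda>_. 1) = 1"
  using cexp_one_single[of "last h" n] by (simp add: cexp_def)

lemma cexp_mono:
  assumes "\<And>e. length e = n \<Longrightarrow> f (h @ e) \<le> f' (h @ e)"
  shows "cexp Pr h n f \<le> cexp Pr h n f'"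
  unfolding cexp_def using assms by (intro sum_mono mult_left_mono hpos) auto

lemma cexp_nonneg:
  assumes "\<And>e. length e = n \<Longrightarrow> 0 \<le> f (h @ e)"
  shows "0 \<le> cexp Pr h n f"
  using cexp_mono[of n "\<lambda>_. 0" h f] assms by (simp add: cexp_zero)

lemma cexp_const: "cexp Pr h n (\<lambda>_. c) = c"
  using cexp_cmult[of Pr h n c "\<lambda>_. 1"] cexp_one by simp

lemma cexp_abs: "\<bar>cexp Pr h n f\<bar> \<le> cexp Pr h n (\<lambda>k. \<bar>f k\<bar>)"
  unfolding cexp_def
  by (rule order_trans[OF sum_abs]) (simp add: abs_mult hpos)

lemma cexp_bound:
  assumes "\<And>e. length e = n \<Longrightarrow> \<bar>f (h @ e)\<bar> \<le> B"
  shows "\<bar>cexp Pr h n f\<bar> \<le> B"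
proof -
  have "cexp Pr h n (\<lambda>k. \<bar>f k\<bar>) \<le> cexp Pr h n (\<lambda>_. B)"
    by (rule cexp_mono) (use assms in auto)
  then show ?thesis using cexp_abs[of h n f] cexp_const[of h n B] by simp
qed

definition P where "P x0 = plans Act zeta p x0"
definition M :: "'s \<Rightarrow> (('s \<times> 'act) list \<Rightarrow> 'i \<Rightarrow> real) set" where "M s0 = mults Pr beta Act s0"
definition Ht :: "nat \<Rightarrow> ('s \<times> 'act) list set" where
  "Ht t = {ht. length ht = Suc t \<and> set ht \<subseteq> UNIV \<times> Act}"
definition mterm :: "(('s \<times> 'act) list \<Rightarrow> 'i \<Rightarrow> real) \<Rightarrow> 's \<Rightarrow> nat \<Rightarrow> real" where
  "mterm lam s0 t = (\<Sum>ht\<in>Ht t. \<Sum>i\<in>UNIV. lam ht i * hprob Pr s0 (map fst ht))"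

lemma M_iff: "lam \<in> M s0 \<longleftrightarrow> (\<forall>ht i. lam ht i \<ge> 0) \<and> summable (\<lambda>t. beta ^ t * mterm lam s0 t)"
  unfolding M_def mults_def mterm_def Ht_def by simp

lemma finite_Ht: "finite (Ht t)"
proof -
  have "finite {xs. set xs \<subseteq> (UNIV::'s set) \<times> Act \<and> length xs = Suc t}"
    by (rule finite_lists_length_eq) (simp add: Act_fin)
  then show ?thesis unfolding Ht_def by (rule finite_subset[rotated]) auto
qed

lemma zero_M: "(\<lambda>_ _. 0) \<in> M s0"
  unfolding M_iff mterm_def by simp

lemma P_Act: "a \<in> P x0 \<Longrightarrow> h \<noteq> [] \<Longrightarrow> a h \<in> Act"
  unfolding P_def plans_def by auto

lemma P_p: "a \<in> P x0 \<Longrightarrow> h \<noteq> [] \<Longrightarrow> p (xst zeta a x0 h) (a h) (last h) \<ge> 0"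
  unfolding P_def plans_def by auto

lemma st_aux_X:
  assumes "a \<in> P x0" "x0 \<in> X" "k < length h"
  shows "st_aux zeta a x0 h k \<in> X"
  using assms(3)
proof (induction k)
  case 0 then show ?case using assms by simp
next
  case (Suc k)
  then have "take (Suc k) h \<noteq> []" by (cases h) auto
  then show ?case using Suc by (auto intro!: zeta_X P_Act[OF assms(1)])
qed

lemma xst_X: "a \<in> P x0 \<Longrightarrow> x0 \<in> X \<Longrightarrow> h \<noteq> [] \<Longrightarrow> xst zeta a x0 h \<in> X"
  unfolding xst_def by (rule st_aux_X) auto

lemma shift_P:
  assumes "a \<in> P x0" "x0 \<in> X"
  shows "shift a s \<in> P (zeta x0 (a [s]) s)"
  unfolding P_def plans_def
proof safe
  fix h :: "'s list" assume h: "h \<noteq> []"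
  show "shift a s h \<in> Act" using P_Act[OF assms(1)] by (simp add: shift_def)
  have "p (xst zeta a x0 (s # h)) (a (s # h)) (last (s # h)) \<ge> 0" by (rule P_p[OF assms(1)]) simp
  then show "0 \<le> p (xst zeta (shift a s) (zeta x0 (a [s]) s) h) (shift a s h) (last h)"
    using h by (simp add: xst_Cons shift_def)
qed


lemma geom_bound:
  assumes "\<And>n. \<bar>c n\<bar> \<le> B"
  shows "summable (\<lambda>n. beta ^ n * c n)" "\<bar>\<Sum>n. beta ^ n * c n\<bar> \<le> B / (1 - beta)"
proof -
  have sg: "summable (\<lambda>n. B * beta ^ n)"
    by (rule summable_mult) (rule summable_geometric, use beta0 beta1 in auto)
  have le: "\<bar>beta ^ n * c n\<bar> \<le> B * beta ^ n" for n
    using assms[of n] beta0 by (simp add: abs_mult mult.commute mult_left_mono)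
  show sm: "summable (\<lambda>n. beta ^ n * c n)"
    by (rule summable_comparison_test[OF _ sg]) (use le in auto)
  have gs: "(\<Sum>n. B * beta ^ n) = B / (1 - beta)"
    using suminf_geometric[of beta] beta0 beta1 by (simp add: suminf_mult)
  have "(\<Sum>n. beta ^ n * c n) \<le> (\<Sum>n. B * beta ^ n)"
    by (rule suminf_le[OF _ sm sg]) (use le in \<open>auto simp: abs_le_iff\<close>)
  moreover have "(\<Sum>n. - (B * beta ^ n)) \<le> (\<Sum>n. beta ^ n * c n)"
    by (rule suminf_le[OF _ summable_minus[OF sg] sm]) (metis abs_le_iff le minus_le_iff)
  ultimately show "\<bar>\<Sum>n. beta ^ n * c n\<bar> \<le> B / (1 - beta)"
    using gs suminf_minus[OF sg] by linarith
qed

lemma series_rec: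
  assumes u: "\<And>t. u (Suc t) = (\<Sum>s'\<in>UNIV. Pr s s' * v s' t)"
    and v: "\<And>s'. summable (\<lambda>t. beta ^ t * v s' t)"
  shows "summable (\<lambda>t. beta ^ t * u t)"
    "(\<Sum>t. beta ^ t * u t) = u 0 + beta * (\<Sum>s'\<in>UNIV. Pr s s' * (\<Sum>t. beta ^ t * v s' t))"
proof -
  have eq: "beta ^ Suc t * u (Suc t) = (\<Sum>s'\<in>UNIV. (beta * Pr s s') * (beta ^ t * v s' t))" for t
    by (simp add: u sum_distrib_left algebra_simps)
  have "(\<lambda>t. \<Sum>s'\<in>UNIV. (beta * Pr s s') * (beta ^ t * v s' t)) sums
        (\<Sum>s'\<in>UNIV. (beta * Pr s s') * (\<Sum>t. beta ^ t * v s' t))"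
    by (intro sums_sum sums_mult summable_sums v)
  then have "(\<lambda>t. beta ^ Suc t * u (Suc t)) sums (beta * (\<Sum>s'\<in>UNIV. Pr s s' * (\<Sum>t. beta ^ t * v s' t)))"
    unfolding eq by (simp add: sum_distrib_left mult.assoc)
  then have "(\<lambda>t. beta ^ t * u t) sums (beta * (\<Sum>s'\<in>UNIV. Pr s s' * (\<Sum>t. beta ^ t * v s' t)) + beta ^ 0 * u 0)"
    by (subst sums_Suc_iff[symmetric]) simp
  then show "summable (\<lambda>t. beta ^ t * u t)"
    "(\<Sum>t. beta ^ t * u t) = u 0 + beta * (\<Sum>s'\<in>UNIV. Pr s s' * (\<Sum>t. beta ^ t * v s' t))"
    by (auto simp: sums_iff)
qed

lemma flow_bound:
  assumes fb: "\<forall>x\<in>X. \<forall>a\<in>Act. \<forall>s. \<bar>f x a s\<bar> \<le> B"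
    and a: "a \<in> P x0" and x0: "x0 \<in> X" and h: "h \<noteq> []"
  shows "\<bar>flow zeta a x0 f h\<bar> \<le> B"
  unfolding flow_def using fb xst_X[OF a x0 h] P_Act[OF a h] by auto

lemma contval_summable:
  assumes fb: "\<forall>x\<in>X. \<forall>a\<in>Act. \<forall>s. \<bar>f x a s\<bar> \<le> B"
    and a: "a \<in> P x0" and x0: "x0 \<in> X" and h: "h \<noteq> []"
  shows "summable (\<lambda>n. beta ^ n * cexp Pr h n (flow zeta a x0 f))"
    "\<bar>contval Pr beta zeta a x0 f h\<bar> \<le> B / (1 - beta)"
proof -
  have "\<bar>cexp Pr h n (flow zeta a x0 f)\<bar> \<le> B" for n
    by (rule cexp_bound) (use flow_bound[OF fb a x0] h in auto)
  from geom_bound[OF this] show "summable (\<lambda>n. beta ^ n * cexp Pr h n (flow zeta a x0 f))"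
    "\<bar>contval Pr beta zeta a x0 f h\<bar> \<le> B / (1 - beta)"
    unfolding contval_def by auto
qed

lemma contval_rec:
  assumes fb: "\<forall>x\<in>X. \<forall>a\<in>Act. \<forall>s. \<bar>f x a s\<bar> \<le> B"
    and a: "a \<in> P x0" and x0: "x0 \<in> X"
  shows "contval Pr beta zeta a x0 f [s] = f x0 (a [s]) s +
      beta * (\<Sum>s'\<in>UNIV. Pr s s' * contval Pr beta zeta (shift a s) (zeta x0 (a [s]) s) f [s'])"
proof -
  have a': "shift a s \<in> P (zeta x0 (a [s]) s)" by (rule shift_P[OF a x0])
  have x': "zeta x0 (a [s]) s \<in> X" by (rule zeta_X[OF x0 P_Act[OF a]]) simp
  have u: "cexp Pr [s] (Suc t) (flow zeta a x0 f) =
     (\<Sum>s'\<in>UNIV. Pr s s' * cexp Pr [s'] t (flow zeta (shift a s) (zeta x0 (a [s]) s) f))" for t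
    unfolding cexp_Suc by (intro sum.cong refl arg_cong2[where f="(*)"] cexp_cong) (simp add: flow_Cons)
  show ?thesis
    unfolding contval_def
    by (subst series_rec(2)[OF u contval_summable(1)[OF fb a' x']]) auto
qed


definition Bg :: "'i \<Rightarrow> real" where
  "Bg i = (SOME B. \<forall>x\<in>X. \<forall>a\<in>Act. \<forall>s. \<bar>g i x a s\<bar> \<le> B)"

lemma Bg: "\<forall>x\<in>X. \<forall>a\<in>Act. \<forall>s. \<bar>g i x a s\<bar> \<le> Bg i"
  unfolding Bg_def by (rule someI_ex) (rule g_bdd)

definition Br :: real where
  "Br = (SOME B. \<forall>x\<in>X. \<forall>a\<in>Act. \<forall>s. \<bar>r x a s\<bar> \<le> B)"

lemma Br: "\<forall>x\<in>X. \<forall>a\<in>Act. \<forall>s. \<bar>r x a s\<bar> \<le> Br"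
  unfolding Br_def by (rule someI_ex) (rule r_bdd)

definition K :: real where "K = (\<Sum>i\<in>UNIV. \<bar>Bg i\<bar> / (1 - beta) + \<bar>gbar i\<bar>)"

lemma K_nonneg: "K \<ge> 0"
  unfolding K_def using beta1 by (intro sum_nonneg add_nonneg_nonneg divide_nonneg_nonneg) auto

lemma contval_gbar_le:
  assumes a: "a \<in> P x0" and x0: "x0 \<in> X" and h: "h \<noteq> []"
  shows "\<bar>contval Pr beta zeta a x0 (g i) h - gbar i\<bar> \<le> K"
proof -
  have "\<bar>contval Pr beta zeta a x0 (g i) h\<bar> \<le> Bg i / (1 - beta)"
    by (rule contval_summable(2)[OF Bg a x0 h])
  also have "\<dots> \<le> \<bar>Bg i\<bar> / (1 - beta)" using beta1 by (simp add: divide_right_mono)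
  finally have 1: "\<bar>contval Pr beta zeta a x0 (g i) h - gbar i\<bar> \<le> \<bar>Bg i\<bar> / (1 - beta) + \<bar>gbar i\<bar>" by linarith
  have "\<bar>Bg i\<bar> / (1 - beta) + \<bar>gbar i\<bar> \<le> K"
    unfolding K_def by (rule member_le_sum) (use beta1 in auto)
  with 1 show ?thesis by linarith
qed

lemma mterm_nonneg: "(\<And>ht i. lam ht i \<ge> 0) \<Longrightarrow> mterm lam s0 t \<ge> 0"
  unfolding mterm_def by (intro sum_nonneg mult_nonneg_nonneg hpos) auto

lemma mterm_ge:
  assumes a: "a \<in> P x0" and lam: "\<And>ht i. lam ht i \<ge> 0"
  shows "cexp Pr [s] t (\<lambda>h. \<Sum>i\<in>UNIV. lam (phist a h) i) \<le> mterm lam s t"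
proof -
  let ?E = "{e::'s list. length e = t}"
  let ?phi = "\<lambda>e. phist a (s # e)"
  let ?G = "\<lambda>ht. \<Sum>i\<in>UNIV. lam ht i * hprob Pr s (map fst ht)"
  have inj: "inj_on ?phi ?E"
  proof (rule inj_onI)
    fix e e' assume "?phi e = ?phi e'"
    then have "map fst (?phi e) = map fst (?phi e')" by simp
    then show "e = e'" by simp
  qed
  have sub: "?phi ` ?E \<subseteq> Ht t"
  proof
    fix ht assume "ht \<in> ?phi ` ?E"
    then obtain e where e: "length e = t" "ht = ?phi e" by auto
    have "set ht \<subseteq> UNIV \<times> Act"
      unfolding e(2) phist_def by (auto intro!: P_Act[OF a])
    then show "ht \<in> Ht t" using e by (simp add: Ht_def)
  qed
  have "cexp Pr [s] t (\<lambda>h. \<Sum>i\<in>UNIV. lam (phist a h) i) = (\<Sum>e\<in>?E. ?G (?phi e))"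
    unfolding cexp_def by (simp add: sum_distrib_left mult.commute)
  also have "\<dots> = (\<Sum>ht\<in>?phi ` ?E. ?G ht)"
    by (simp add: sum.reindex[OF inj])
  also have "\<dots> \<le> (\<Sum>ht\<in>Ht t. ?G ht)"
    by (rule sum_mono2[OF finite_Ht sub]) (auto intro!: sum_nonneg mult_nonneg_nonneg hpos lam)
  finally show ?thesis unfolding mterm_def .
qed

definition Psi where
  "Psi a lam x0 h = (\<Sum>i\<in>UNIV. lam (phist a h) i * (contval Pr beta zeta a x0 (g i) h - gbar i))"

definition V1 where
  "V1 a lam x0 s0 = (\<Sum>t. beta ^ t * cexp Pr [s0] t (Psi a lam x0))"

lemma V1_summable:
  assumes a: "a \<in> P x0" and x0: "x0 \<in> X" and lam: "lam \<in> M s"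
  shows "summable (\<lambda>t. beta ^ t * cexp Pr [s] t (Psi a lam x0))"
proof -
  have ln: "\<And>ht i. lam ht i \<ge> 0" and sm: "summable (\<lambda>t. beta ^ t * mterm lam s t)"
    using lam by (auto simp: M_iff)
  have "\<bar>cexp Pr [s] t (Psi a lam x0)\<bar> \<le> K * mterm lam s t" for t
  proof -
    have "\<bar>cexp Pr [s] t (Psi a lam x0)\<bar> \<le> cexp Pr [s] t (\<lambda>h. K * (\<Sum>i\<in>UNIV. lam (phist a h) i))"
    proof (rule order_trans[OF cexp_abs cexp_mono])
      fix e :: "'s list"
      have "\<bar>Psi a lam x0 ([s] @ e)\<bar> \<le> (\<Sum>i\<in>UNIV. \<bar>lam (phist a (s # e)) i * (contval Pr beta zeta a x0 (g i) (s # e) - gbar i)\<bar>)"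
        unfolding Psi_def by (simp add: sum_abs)
      also have "\<dots> \<le> (\<Sum>i\<in>UNIV. lam (phist a (s # e)) i * K)"
        by (intro sum_mono) (auto simp: abs_mult ln intro!: mult_left_mono contval_gbar_le[OF a x0])
      finally show "\<bar>Psi a lam x0 ([s] @ e)\<bar> \<le> K * (\<Sum>i\<in>UNIV. lam (phist a ([s] @ e)) i)"
        by (simp add: sum_distrib_left mult.commute)
    qed
    also have "\<dots> = K * cexp Pr [s] t (\<lambda>h. \<Sum>i\<in>UNIV. lam (phist a h) i)" by (rule cexp_cmult)
    also have "\<dots> \<le> K * mterm lam s t"
      by (rule mult_left_mono[OF mterm_ge[OF a ln]]) (rule K_nonneg)
    finally show ?thesis .
  qed
  then have "norm (beta ^ t * cexp Pr [s] t (Psi a lam x0)) \<le> K * (beta ^ t * mterm lam s t)" for t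
    using beta0 by (simp add: abs_mult mult.left_commute mult_left_mono)
  then show ?thesis
    by (intro summable_comparison_test[OF _ summable_mult[OF sm]]) auto
qed


abbreviation L where "L a lam gam x0 s0 \<equiv> lagr Pr beta zeta r g gbar a lam gam x0 s0"
abbreviation CV where "CV a x0 f h \<equiv> contval Pr beta zeta a x0 f h"

lemma lagr_decomp:
  assumes a: "a \<in> P x0" and x0: "x0 \<in> X" and lam: "lam \<in> M s"
  shows "L a lam gam x0 s = CV a x0 r [s] + (\<Sum>i\<in>UNIV. gam i * CV a x0 (g i) [s]) + V1 a lam x0 s"
proof -
  have ps: "(\<lambda>h. \<Sum>i\<in>UNIV. lam (phist a h) i * (contval Pr beta zeta a x0 (g i) h - gbar i)) = Psi a lam x0"
    by (simp add: Psi_def fun_eq_iff)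
  have inner: "beta ^ t * cexp Pr [s] t (\<lambda>h. flow zeta a x0 r h + (\<Sum>i\<in>UNIV. gam i * flow zeta a x0 (g i) h)
         + (\<Sum>i\<in>UNIV. lam (phist a h) i * (contval Pr beta zeta a x0 (g i) h - gbar i))) =
     beta ^ t * cexp Pr [s] t (flow zeta a x0 r) + (\<Sum>i\<in>UNIV. gam i * (beta ^ t * cexp Pr [s] t (flow zeta a x0 (g i))))
       + beta ^ t * cexp Pr [s] t (Psi a lam x0)" for t
  proof -
    have c3: "cexp Pr [s] t (\<lambda>h. \<Sum>i\<in>UNIV. lam (phist a h) i * (contval Pr beta zeta a x0 (g i) h - gbar i)) = cexp Pr [s] t (Psi a lam x0)"
      using ps by simp
    have c2: "cexp Pr [s] t (\<lambda>h. \<Sum>i\<in>UNIV. gam i * flow zeta a x0 (g i) h) = (\<Sum>i\<in>UNIV. gam i * cexp Pr [s] t (flow zeta a x0 (g i)))"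
      by (simp add: cexp_sum cexp_cmult)
    show ?thesis by (simp only: cexp_add c2 c3) (simp add: algebra_simps sum_distrib_left)
  qed
  have s1: "(\<lambda>t. beta ^ t * cexp Pr [s] t (flow zeta a x0 r)) sums CV a x0 r [s]"
    unfolding contval_def by (rule summable_sums[OF contval_summable(1)[OF Br a x0]]) simp
  have s2: "(\<lambda>t. \<Sum>i\<in>UNIV. gam i * (beta ^ t * cexp Pr [s] t (flow zeta a x0 (g i)))) sums
      (\<Sum>i\<in>UNIV. gam i * CV a x0 (g i) [s])"
    unfolding contval_def by (intro sums_sum sums_mult summable_sums contval_summable(1)[OF Bg a x0]) simp
  have s3: "(\<lambda>t. beta ^ t * cexp Pr [s] t (Psi a lam x0)) sums V1 a lam x0 s"
    unfolding V1_def by (rule summable_sums[OF V1_summable[OF a x0 lam]])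
  show ?thesis
    unfolding lagr_def inner using sums_add[OF sums_add[OF s1 s2] s3] by (simp add: sums_iff)
qed

lemma hprob_step: "Pr s s' * hprob Pr s' l \<le> hprob Pr s (s # l)"
proof (cases l)
  case Nil then show ?thesis by simp
next
  case (Cons s2 l')
  show ?thesis
  proof (cases "s2 = s'")
    case True then show ?thesis using Cons by (simp add: hprob_Cons2)
  next
    case False then show ?thesis using Cons by (simp add: hprob_Cons_ne hpos)
  qed
qed

lemma M_shift:
  assumes lam: "lam \<in> M s" and a0: "a0 \<in> Act"
  shows "shiftl lam (s, a0) \<in> M s'"
proof -
  have ln: "\<And>ht i. lam ht i \<ge> 0" and sm: "summable (\<lambda>t. beta ^ t * mterm lam s t)"
    using lam by (auto simp: M_iff)
  have ln': "\<And>ht i. shiftl lam (s, a0) ht i \<ge> 0" by (simp add: shiftl_def ln)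
  have key: "Pr s s' * mterm (shiftl lam (s, a0)) s' t \<le> mterm lam s (Suc t)" for t
  proof -
    let ?G = "\<lambda>ht. \<Sum>i\<in>UNIV. lam ht i * hprob Pr s (map fst ht)"
    have inj: "inj_on ((#) (s, a0)) (Ht t)" by (auto simp: inj_on_def)
    have sub: "(#) (s, a0) ` Ht t \<subseteq> Ht (Suc t)" using a0 by (auto simp: Ht_def)
    have "Pr s s' * mterm (shiftl lam (s, a0)) s' t =
        (\<Sum>ht\<in>Ht t. \<Sum>i\<in>UNIV. lam ((s, a0) # ht) i * (Pr s s' * hprob Pr s' (map fst ht)))"
      unfolding mterm_def shiftl_def by (simp add: sum_distrib_left mult.left_commute)
    also have "\<dots> \<le> (\<Sum>ht\<in>Ht t. ?G ((s, a0) # ht))"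
      by (intro sum_mono mult_left_mono) (auto simp: ln hprob_step)
    also have "\<dots> = (\<Sum>ht\<in>(#) (s, a0) ` Ht t. ?G ht)"
      by (simp add: sum.reindex[OF inj])
    also have "\<dots> \<le> (\<Sum>ht\<in>Ht (Suc t). ?G ht)"
      by (rule sum_mono2[OF finite_Ht sub]) (auto intro!: sum_nonneg mult_nonneg_nonneg hpos ln)
    finally show ?thesis unfolding mterm_def .
  qed
  have sm2: "summable (\<lambda>t. (beta ^ Suc t * mterm lam s (Suc t)) / (beta * Pr s s'))"
    by (intro summable_divide) (simp only: summable_Suc_iff[of "\<lambda>t. beta ^ t * mterm lam s t"] sm)
  have "norm (beta ^ t * mterm (shiftl lam (s, a0)) s' t) \<le> (beta ^ Suc t * mterm lam s (Suc t)) / (beta * Pr s s')" for t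
  proof -
    have "mterm (shiftl lam (s, a0)) s' t \<le> mterm lam s (Suc t) / Pr s s'"
      using key[of t] Pr_pos[of s s'] by (simp add: pos_le_divide_eq mult.commute)
    then have "beta ^ t * mterm (shiftl lam (s, a0)) s' t \<le> beta ^ t * (mterm lam s (Suc t) / Pr s s')"
      by (rule mult_left_mono) (use beta0 in simp)
    moreover have "mterm (shiftl lam (s, a0)) s' t \<ge> 0" by (rule mterm_nonneg[OF ln'])
    ultimately show ?thesis using beta0 by simp
  qed
  then have "summable (\<lambda>t. beta ^ t * mterm (shiftl lam (s, a0)) s' t)"
    by (intro summable_comparison_test[OF _ sm2]) auto
  then show ?thesis using ln' by (simp add: M_iff)
qed

lemma V1_rec:
  assumes a: "a \<in> P x0" and x0: "x0 \<in> X" and lam: "lam \<in> M s"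
  shows "V1 a lam x0 s = (\<Sum>i\<in>UNIV. lam [(s, a [s])] i * (CV a x0 (g i) [s] - gbar i)) +
     beta * (\<Sum>s'\<in>UNIV. Pr s s' * V1 (shift a s) (shiftl lam (s, a [s])) (zeta x0 (a [s]) s) s')"
proof -
  have a0: "a [s] \<in> Act" by (rule P_Act[OF a]) simp
  have a': "shift a s \<in> P (zeta x0 (a [s]) s)" by (rule shift_P[OF a x0])
  have x': "zeta x0 (a [s]) s \<in> X" by (rule zeta_X[OF x0 a0])
  have psi: "Psi a lam x0 (s # h) = Psi (shift a s) (shiftl lam (s, a [s])) (zeta x0 (a [s]) s) h" if "h \<noteq> []" for h
    unfolding Psi_def using that by (simp add: phist_Cons contval_Cons shiftl_def)
  have u: "cexp Pr [s] (Suc t) (Psi a lam x0) =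
     (\<Sum>s'\<in>UNIV. Pr s s' * cexp Pr [s'] t (Psi (shift a s) (shiftl lam (s, a [s])) (zeta x0 (a [s]) s)))" for t
    unfolding cexp_Suc by (intro sum.cong refl arg_cong2[where f="(*)"] cexp_cong) (simp add: psi)
  show ?thesis
    unfolding V1_def
    by (subst series_rec(2)[OF u V1_summable[OF a' x' M_shift[OF lam a0]]]) (simp add: Psi_def)
qed


definition F where
  "F x0 a0 s0 l gam = r x0 a0 s0 + (\<Sum>i\<in>UNIV. gam i * g i x0 a0 s0 + l i * (g i x0 a0 s0 - gbar i))"

lemma alg_aux: "(\<Sum>i\<in>A. u i * (v i + b * w i)) + ((\<Sum>i\<in>A. l i * ((v i + b * w i) - c i)) + z) =
   (\<Sum>i\<in>A. u i * v i + l i * (v i - c i)) + b * (\<Sum>i\<in>A. (u i + l i) * w i) + (z::real)"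
proof -
  have "(\<Sum>i\<in>A. u i * (v i + b * w i)) + (\<Sum>i\<in>A. l i * ((v i + b * w i) - c i)) =
    (\<Sum>i\<in>A. u i * v i + l i * (v i - c i)) + b * (\<Sum>i\<in>A. (u i + l i) * w i)"
    unfolding sum_distrib_left sum.distrib[symmetric] by (rule sum.cong) (auto simp: algebra_simps)
  then show ?thesis by simp
qed

lemma swap_aux: "(\<Sum>s'\<in>UNIV. Pr s s' * (\<Sum>i\<in>UNIV. c i * G i s')) = (\<Sum>i\<in>UNIV. c i * (\<Sum>s'\<in>UNIV. Pr s s' * G i s'))"
proof -
  have "(\<Sum>s'\<in>UNIV. Pr s s' * (\<Sum>i\<in>UNIV. c i * G i s')) = (\<Sum>s'\<in>UNIV. \<Sum>i\<in>UNIV. Pr s s' * (c i * G i s'))"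
    by (simp add: sum_distrib_left)
  also have "\<dots> = (\<Sum>i\<in>UNIV. \<Sum>s'\<in>UNIV. Pr s s' * (c i * G i s'))"
    by (rule sum.swap)
  also have "\<dots> = (\<Sum>i\<in>UNIV. c i * (\<Sum>s'\<in>UNIV. Pr s s' * G i s'))"
    by (simp add: sum_distrib_left mult.left_commute)
  finally show ?thesis .
qed

lemma lagr_rec:
  assumes a: "a \<in> P x0" and x0: "x0 \<in> X" and lam: "lam \<in> M s"
  shows "L a lam gam x0 s = F x0 (a [s]) s (lam [(s, a [s])]) gam +
     beta * (\<Sum>s'\<in>UNIV. Pr s s' * L (shift a s) (shiftl lam (s, a [s])) (\<lambda>i. gam i + lam [(s, a [s])] i) (zeta x0 (a [s]) s) s')"
proof -
  define a0 where "a0 = a [s]"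
  define l0 where "l0 = lam [(s, a0)]"
  define x' where "x' = zeta x0 a0 s"
  define a' where "a' = shift a s"
  define lam' where "lam' = shiftl lam (s, a0)"
  have a0A: "a0 \<in> Act" unfolding a0_def by (rule P_Act[OF a]) simp
  have a': "a' \<in> P x'" unfolding a'_def x'_def a0_def by (rule shift_P[OF a x0])
  have x': "x' \<in> X" unfolding x'_def by (rule zeta_X[OF x0 a0A])
  have lam': "lam' \<in> M s'" for s' unfolding lam'_def by (rule M_shift[OF lam a0A])
  define R where "R s' = CV a' x' r [s']" for s'
  define G where "G i s' = CV a' x' (g i) [s']" for i s'
  define W where "W s' = V1 a' lam' x' s'" for s'
  have Lc: "L a' lam' (\<lambda>i. gam i + l0 i) x' s' = R s' + (\<Sum>i\<in>UNIV. (gam i + l0 i) * G i s') + W s'" for s'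
    unfolding R_def G_def W_def by (rule lagr_decomp[OF a' x' lam'])
  have L0: "L a lam gam x0 s = CV a x0 r [s] + (\<Sum>i\<in>UNIV. gam i * CV a x0 (g i) [s]) + V1 a lam x0 s"
    by (rule lagr_decomp[OF a x0 lam])
  have cr: "CV a x0 r [s] = r x0 a0 s + beta * (\<Sum>s'\<in>UNIV. Pr s s' * R s')"
    unfolding R_def a'_def x'_def a0_def by (rule contval_rec[OF Br a x0])
  have cg: "CV a x0 (g i) [s] = g i x0 a0 s + beta * (\<Sum>s'\<in>UNIV. Pr s s' * G i s')" for i
    unfolding G_def a'_def x'_def a0_def by (rule contval_rec[OF Bg a x0])
  have cv: "V1 a lam x0 s = (\<Sum>i\<in>UNIV. l0 i * (CV a x0 (g i) [s] - gbar i)) + beta * (\<Sum>s'\<in>UNIV. Pr s s' * W s')"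
    unfolding W_def a'_def x'_def a0_def lam'_def l0_def by (rule V1_rec[OF a x0 lam])
  have e1: "(\<Sum>s'\<in>UNIV. Pr s s' * L a' lam' (\<lambda>i. gam i + l0 i) x' s') =
     (\<Sum>s'\<in>UNIV. Pr s s' * R s') + (\<Sum>i\<in>UNIV. (gam i + l0 i) * (\<Sum>s'\<in>UNIV. Pr s s' * G i s')) + (\<Sum>s'\<in>UNIV. Pr s s' * W s')"
    unfolding Lc by (simp add: distrib_left sum.distrib swap_aux[of _ "\<lambda>i. gam i + l0 i" G])
  show ?thesis
    unfolding a0_def[symmetric] l0_def[symmetric] x'_def[symmetric] a'_def[symmetric] lam'_def[symmetric]
    unfolding e1 L0 cv cg cr F_def
  proof -
    have "r x0 a0 s + beta * (\<Sum>s'\<in>UNIV. Pr s s' * R s') + (\<Sum>i\<in>UNIV. gam i * (g i x0 a0 s + beta * (\<Sum>s'\<in>UNIV. Pr s s' * G i s'))) +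
      ((\<Sum>i\<in>UNIV. l0 i * (g i x0 a0 s + beta * (\<Sum>s'\<in>UNIV. Pr s s' * G i s') - gbar i)) + beta * (\<Sum>s'\<in>UNIV. Pr s s' * W s'))
      = r x0 a0 s + beta * (\<Sum>s'\<in>UNIV. Pr s s' * R s') + ((\<Sum>i\<in>UNIV. gam i * g i x0 a0 s + l0 i * (g i x0 a0 s - gbar i)) + beta * (\<Sum>i\<in>UNIV. (gam i + l0 i) * (\<Sum>s'\<in>UNIV. Pr s s' * G i s')) + beta * (\<Sum>s'\<in>UNIV. Pr s s' * W s'))"
      by (subst add.assoc, subst alg_aux, rule refl)
    then show "r x0 a0 s + beta * (\<Sum>s'\<in>UNIV. Pr s s' * R s') + (\<Sum>i\<in>UNIV. gam i * (g i x0 a0 s + beta * (\<Sum>s'\<in>UNIV. Pr s s' * G i s'))) +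
      ((\<Sum>i\<in>UNIV. l0 i * (g i x0 a0 s + beta * (\<Sum>s'\<in>UNIV. Pr s s' * G i s') - gbar i)) + beta * (\<Sum>s'\<in>UNIV. Pr s s' * W s')) =
      r x0 a0 s + (\<Sum>i\<in>UNIV. gam i * g i x0 a0 s + l0 i * (g i x0 a0 s - gbar i)) +
      beta * ((\<Sum>s'\<in>UNIV. Pr s s' * R s') + (\<Sum>i\<in>UNIV. (gam i + l0 i) * (\<Sum>s'\<in>UNIV. Pr s s' * G i s')) + (\<Sum>s'\<in>UNIV. Pr s s' * W s'))"
      by (simp only: distrib_left)
  qed
qed


lemma lagr_cong_plan:
  assumes "\<And>h. h \<noteq> [] \<Longrightarrow> hd h = s \<Longrightarrow> a1 h = a2 h"
  shows "L a1 lam gam x0 s = L a2 lam gam x0 s"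
  unfolding lagr_def
proof (intro arg_cong[where f=suminf] ext arg_cong2[where f="(*)"] refl cexp_cong)
  fix t and e :: "'s list"
  have ag: "a1 h' = a2 h'" if "h' \<noteq> []" "hd h' = hd ([s] @ e)" for h' using assms that by simp
  show "flow zeta a1 x0 r ([s] @ e) + (\<Sum>i\<in>UNIV. gam i * flow zeta a1 x0 (g i) ([s] @ e)) +
        (\<Sum>i\<in>UNIV. lam (phist a1 ([s] @ e)) i * (CV a1 x0 (g i) ([s] @ e) - gbar i)) =
        flow zeta a2 x0 r ([s] @ e) + (\<Sum>i\<in>UNIV. gam i * flow zeta a2 x0 (g i) ([s] @ e)) +
        (\<Sum>i\<in>UNIV. lam (phist a2 ([s] @ e)) i * (CV a2 x0 (g i) ([s] @ e) - gbar i))"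
  proof -
    have f1: "flow zeta a1 x0 f ([s] @ e) = flow zeta a2 x0 f ([s] @ e)" for f
      by (rule flow_cong) (auto intro: ag)
    have f2: "phist a1 ([s] @ e) = phist a2 ([s] @ e)"
      by (rule phist_cong) (auto intro: ag)
    have f3: "CV a1 x0 f ([s] @ e) = CV a2 x0 f ([s] @ e)" for f
      by (rule contval_cong) (auto intro: ag)
    show ?thesis by (simp only: f1 f2 f3)
  qed
qed

lemma lagr_cong_lam:
  assumes "\<And>ht. ht \<noteq> [] \<Longrightarrow> fst (hd ht) = s \<Longrightarrow> lam1 ht = lam2 ht"
  shows "L a lam1 gam x0 s = L a lam2 gam x0 s"
  unfolding lagr_def
proof (intro arg_cong[where f=suminf] ext arg_cong2[where f="(*)"] refl cexp_cong)
  fix t and e :: "'s list"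
  have "lam1 (phist a ([s] @ e)) = lam2 (phist a ([s] @ e))"
    by (rule assms) (auto simp: phist_Cons)
  then show "flow zeta a x0 r ([s] @ e) + (\<Sum>i\<in>UNIV. gam i * flow zeta a x0 (g i) ([s] @ e)) +
        (\<Sum>i\<in>UNIV. lam1 (phist a ([s] @ e)) i * (CV a x0 (g i) ([s] @ e) - gbar i)) =
        flow zeta a x0 r ([s] @ e) + (\<Sum>i\<in>UNIV. gam i * flow zeta a x0 (g i) ([s] @ e)) +
        (\<Sum>i\<in>UNIV. lam2 (phist a ([s] @ e)) i * (CV a x0 (g i) ([s] @ e) - gbar i))"
    by simp
qed

definition glue :: "'s \<Rightarrow> 'act \<Rightarrow> ('s \<Rightarrow> 's list \<Rightarrow> 'act) \<Rightarrow> ('s list \<Rightarrow> 'act) \<Rightarrow> 's list \<Rightarrow> 'act" where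
  "glue s0 a0 b c h = (case h of [] \<Rightarrow> c [] | [s1] \<Rightarrow> if s1 = s0 then a0 else c h
      | s1 # s2 # rest \<Rightarrow> if s1 = s0 then b s2 (s2 # rest) else c h)"

lemma glue_single[simp]: "glue s0 a0 b c [s0] = a0"
  by (simp add: glue_def)

lemma glue_Cons: "h \<noteq> [] \<Longrightarrow> glue s0 a0 b c (s0 # h) = b (hd h) h"
  by (cases h) (auto simp: glue_def)

lemma glue_other: "h \<noteq> [] \<Longrightarrow> hd h \<noteq> s0 \<Longrightarrow> glue s0 a0 b c h = c h"
  by (cases h rule: remdups_adj.cases) (auto simp: glue_def)

lemma glue_P:
  assumes x0: "x0 \<in> X" and a0: "a0 \<in> Act" "p x0 a0 s0 \<ge> 0"
    and b: "\<And>s'. b s' \<in> P (zeta x0 a0 s0)" and c: "c \<in> P x0"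
  shows "glue s0 a0 b c \<in> P x0"
  unfolding P_def plans_def
proof safe
  fix h :: "'s list" assume h: "h \<noteq> []"
  let ?a = "glue s0 a0 b c"
  have "?a h \<in> Act \<and> 0 \<le> p (xst zeta ?a x0 h) (?a h) (last h)"
  proof (cases "hd h = s0")
    case False
    have "xst zeta ?a x0 h = xst zeta c x0 h"
      by (rule xst_cong[OF h]) (simp add: glue_other False)
    then show ?thesis using glue_other[OF h False] P_Act[OF c h] P_p[OF c h] by simp
  next
    case True
    then obtain h' where h': "h = s0 # h'" using h by (cases h) auto
    show ?thesis
    proof (cases "h' = []")
      case True then show ?thesis using h' a0 by simp
    next
      case False
      have sh: "shift ?a s0 = (\<lambda>k. glue s0 a0 b c (s0 # k))" by (simp add: shift_def fun_eq_iff)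
      have "xst zeta ?a x0 h = xst zeta (shift ?a s0) (zeta x0 a0 s0) h'"
        using h' False by (simp add: xst_Cons)
      also have "\<dots> = xst zeta (b (hd h')) (zeta x0 a0 s0) h'"
        by (rule xst_cong[OF False]) (simp add: sh glue_Cons)
      finally show ?thesis
        using h' False glue_Cons[OF False] P_Act[OF b False] P_p[OF b False] by simp
    qed
  qed
  then show "?a h \<in> Act" "0 \<le> p (xst zeta ?a x0 h) (?a h) (last h)" by auto
qed

lemma shift_glue: "h \<noteq> [] \<Longrightarrow> hd h = s' \<Longrightarrow> shift (glue s0 a0 b c) s0 h = b s' h"
  by (simp add: shift_def glue_Cons)


abbreviation D where "D gam x0 s0 \<equiv> Dtil Pr beta Act zeta p r g gbar gam x0 s0"

lemma D_eq: "D gam x0 s0 = (INF lam\<in>M s0. SUP a\<in>P x0. ereal (L a lam gam x0 s0))"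
  by (simp add: Dtil_def M_def P_def)

definition C :: "('i \<Rightarrow> real) \<Rightarrow> real" where
  "C gam = \<bar>Br\<bar> / (1 - beta) + (\<Sum>i\<in>UNIV. \<bar>gam i\<bar> * (\<bar>Bg i\<bar> / (1 - beta)))"

lemma CV_part_bound:
  assumes a: "a \<in> P x0" and x0: "x0 \<in> X"
  shows "\<bar>CV a x0 r [s] + (\<Sum>i\<in>UNIV. gam i * CV a x0 (g i) [s])\<bar> \<le> C gam"
proof -
  have "\<bar>CV a x0 r [s]\<bar> \<le> Br / (1 - beta)" by (rule contval_summable(2)[OF Br a x0]) simp
  also have "\<dots> \<le> \<bar>Br\<bar> / (1 - beta)" using beta1 by (simp add: divide_right_mono)
  finally have 1: "\<bar>CV a x0 r [s]\<bar> \<le> \<bar>Br\<bar> / (1 - beta)" .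
  have "\<bar>CV a x0 (g i) [s]\<bar> \<le> \<bar>Bg i\<bar> / (1 - beta)" for i
  proof -
    have "\<bar>CV a x0 (g i) [s]\<bar> \<le> Bg i / (1 - beta)" by (rule contval_summable(2)[OF Bg a x0]) simp
    also have "\<dots> \<le> \<bar>Bg i\<bar> / (1 - beta)" using beta1 by (simp add: divide_right_mono)
    finally show ?thesis .
  qed
  then have "\<bar>gam i * CV a x0 (g i) [s]\<bar> \<le> \<bar>gam i\<bar> * (\<bar>Bg i\<bar> / (1 - beta))" for i
    unfolding abs_mult by (intro mult_left_mono) auto
  then have "\<bar>\<Sum>i\<in>UNIV. gam i * CV a x0 (g i) [s]\<bar> \<le> (\<Sum>i\<in>UNIV. \<bar>gam i\<bar> * (\<bar>Bg i\<bar> / (1 - beta)))"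
    by (intro order_trans[OF sum_abs] sum_mono)
  with 1 show ?thesis unfolding C_def by linarith
qed

lemma V1_zero: "V1 a (\<lambda>_ _. 0) x0 s = 0"
  unfolding V1_def Psi_def by (simp add: cexp_zero)

lemma V1_nonneg:
  assumes a: "a \<in> P x0" and x0: "x0 \<in> X" and lam: "lam \<in> M s"
    and fe: "feasible Pr beta Act zeta p g gbar x0 s a"
  shows "V1 a lam x0 s \<ge> 0"
  unfolding V1_def
proof (rule suminf_nonneg[OF V1_summable[OF a x0 lam]])
  fix t
  have ln: "\<And>ht i. lam ht i \<ge> 0" using lam by (auto simp: M_iff)
  have "0 \<le> cexp Pr [s] t (Psi a lam x0)"
  proof (rule cexp_nonneg)
    fix e :: "'s list"
    have "contval Pr beta zeta a x0 (g i) (s # e) \<ge> gbar i" for i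
      using fe unfolding feasible_def by auto
    then show "0 \<le> Psi a lam x0 ([s] @ e)"
      unfolding Psi_def by (auto intro!: sum_nonneg mult_nonneg_nonneg ln)
  qed
  then show "0 \<le> beta ^ t * cexp Pr [s] t (Psi a lam x0)" using beta0 by simp
qed

lemma P_nonempty: "x0 \<in> X \<Longrightarrow> \<exists>a. a \<in> P x0 \<and> feasible Pr beta Act zeta p g gbar x0 s a"
  using feas[of x0 s] unfolding feasible_def P_def by auto

lemma D_bounds:
  assumes x0: "x0 \<in> X"
  shows "ereal (- C gam) \<le> D gam x0 s" "D gam x0 s \<le> ereal (C gam)"
proof -
  obtain af where af: "af \<in> P x0" "feasible Pr beta Act zeta p g gbar x0 s af"
    using P_nonempty[OF x0] by blast
  show "ereal (- C gam) \<le> D gam x0 s"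
    unfolding D_eq
  proof (rule INF_greatest)
    fix lam assume lam: "lam \<in> M s"
    have "- C gam \<le> L af lam gam x0 s"
      using lagr_decomp[OF af(1) x0 lam, of gam] CV_part_bound[OF af(1) x0, of s gam]
        V1_nonneg[OF af(1) x0 lam af(2)] by linarith
    then show "ereal (- C gam) \<le> (SUP a\<in>P x0. ereal (L a lam gam x0 s))"
      by (intro SUP_upper2[OF af(1)]) simp
  qed
  have "D gam x0 s \<le> (SUP a\<in>P x0. ereal (L a (\<lambda>_ _. 0) gam x0 s))"
    unfolding D_eq by (rule INF_lower) (rule zero_M)
  also have "\<dots> \<le> ereal (C gam)"
  proof (rule SUP_least)
    fix a assume a: "a \<in> P x0"
    show "ereal (L a (\<lambda>_ _. 0) gam x0 s) \<le> ereal (C gam)"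
      using lagr_decomp[OF a x0 zero_M, of gam] CV_part_bound[OF a x0, of s gam] V1_zero[of a x0 s]
      by simp
  qed
  finally show "D gam x0 s \<le> ereal (C gam)" .
qed

definition Dr where "Dr gam x0 s0 = real_of_ereal (D gam x0 s0)"

lemma D_real: "x0 \<in> X \<Longrightarrow> D gam x0 s0 = ereal (Dr gam x0 s0)"
  using D_bounds[of x0 gam s0] unfolding Dr_def by (cases "D gam x0 s0") auto


definition glam :: "('act \<Rightarrow> 'i \<Rightarrow> real) \<Rightarrow> ('act \<Rightarrow> 's \<Rightarrow> ('s \<times> 'act) list \<Rightarrow> 'i \<Rightarrow> real) \<Rightarrow> ('s \<times> 'act) list \<Rightarrow> 'i \<Rightarrow> real" where
  "glam l0 Lam ht = (case ht of [] \<Rightarrow> (\<lambda>_. 0) | [sa] \<Rightarrow> l0 (snd sa)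
      | sa # sb # rest \<Rightarrow> Lam (snd sa) (fst sb) (sb # rest))"

lemma glam_single[simp]: "glam l0 Lam [sa] = l0 (snd sa)"
  by (simp add: glam_def)

lemma glam_Cons: "ht \<noteq> [] \<Longrightarrow> glam l0 Lam (sa # ht) = Lam (snd sa) (fst (hd ht)) ht"
  by (cases ht) (auto simp: glam_def)

lemma hprob_le_hd: assumes "l \<noteq> []" shows "hprob Pr s0 (s1 # l) \<le> hprob Pr (hd l) l"
proof (cases l)
  case Nil then show ?thesis using \<open>l \<noteq> []\<close> by simp
next
  case (Cons s2 l')
  show ?thesis
  proof (cases "s1 = s0")
    case True
    have "Pr s0 s2 * hprob Pr s2 (s2 # l') \<le> 1 * hprob Pr s2 (s2 # l')"
      by (rule mult_right_mono[OF Pr_le1 hpos])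
    then show ?thesis using Cons True by (simp add: hprob_Cons2)
  next
    case False then show ?thesis using Cons by (simp add: hprob_Cons_ne hpos)
  qed
qed

lemma Ht_Suc: "Ht (Suc t) = (\<lambda>(sa, ht). sa # ht) ` ((UNIV \<times> Act) \<times> Ht t)"
proof -
  have "ht \<in> (\<lambda>(sa, ht). sa # ht) ` ((UNIV \<times> Act) \<times> Ht t)" if "ht \<in> Ht (Suc t)" for ht
    using that by (cases ht) (auto simp: Ht_def)
  moreover have "(\<lambda>(sa, ht). sa # ht) ` ((UNIV \<times> Act) \<times> Ht t) \<subseteq> Ht (Suc t)"
    by (auto simp: Ht_def)
  ultimately show ?thesis by blast
qed

lemma glam_M:
  assumes l0: "\<And>a i. l0 a i \<ge> 0" and Lam: "\<And>a s'. Lam a s' \<in> M s'"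
  shows "glam l0 Lam \<in> M s"
proof -
  have Ln: "Lam a s' ht i \<ge> 0" for a s' ht i using Lam[of a s'] by (auto simp: M_iff)
  have gn: "glam l0 Lam ht i \<ge> 0" for ht i
    by (cases ht rule: remdups_adj.cases) (auto simp: glam_def l0 Ln)
  define mt where "mt a1 s2 ht = (\<Sum>i\<in>UNIV. Lam a1 s2 ht i * hprob Pr s2 (map fst ht))" for a1 s2 ht
  have mtn: "mt a1 s2 ht \<ge> 0" for a1 s2 ht
    unfolding mt_def by (intro sum_nonneg mult_nonneg_nonneg Ln hpos)
  let ?G = "\<lambda>ht. \<Sum>i\<in>UNIV. glam l0 Lam ht i * hprob Pr s (map fst ht)"
  let ?Q = "\<lambda>ht. \<Sum>a1\<in>Act. \<Sum>s2\<in>UNIV. mt a1 s2 ht"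
  have step: "?G (sa # ht) \<le> ?Q ht" if sa: "sa \<in> UNIV \<times> Act" and ht: "ht \<in> Ht t" for sa ht t
  proof -
    have ne: "ht \<noteq> []" using ht by (auto simp: Ht_def)
    have mne: "map fst ht \<noteq> []" using ne by simp
    have "?G (sa # ht) = (\<Sum>i\<in>UNIV. Lam (snd sa) (fst (hd ht)) ht i * hprob Pr s (fst sa # map fst ht))"
      by (simp add: glam_Cons[OF ne])
    also have "\<dots> \<le> mt (snd sa) (fst (hd ht)) ht"
      unfolding mt_def using hprob_le_hd[OF mne, of s "fst sa"] ne
      by (intro sum_mono mult_left_mono Ln) (simp add: hd_map)
    also have "\<dots> \<le> (\<Sum>s2\<in>UNIV. mt (snd sa) s2 ht)"
      by (rule member_le_sum) (auto intro: mtn)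
    also have "\<dots> \<le> ?Q ht"
      by (rule member_le_sum[where f="\<lambda>a1. \<Sum>s2\<in>UNIV. mt a1 s2 ht"]) (use sa Act_fin in \<open>auto intro!: sum_nonneg mtn\<close>)
    finally show ?thesis .
  qed
  have inj: "inj_on (\<lambda>(sa, ht). sa # ht) ((UNIV \<times> Act) \<times> Ht t)" by (auto simp: inj_on_def)
  have key: "mterm (glam l0 Lam) s (Suc t) \<le> of_nat (card ((UNIV::'s set) \<times> Act)) * (\<Sum>a1\<in>Act. \<Sum>s2\<in>UNIV. mterm (Lam a1 s2) s2 t)" for t
  proof -
    define cons2 where "cons2 = (\<lambda>(sa::'s \<times> 'act, ht). sa # ht)"
    have inj2: "inj_on cons2 ((UNIV \<times> Act) \<times> Ht t)" unfolding cons2_def by (auto simp: inj_on_def)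
    have c2: "cons2 x = fst x # snd x" for x unfolding cons2_def by (simp add: case_prod_unfold)
    have "mterm (glam l0 Lam) s (Suc t) = sum ?G (cons2 ` ((UNIV \<times> Act) \<times> Ht t))"
      unfolding mterm_def Ht_Suc cons2_def ..
    also have "\<dots> = (\<Sum>x\<in>(UNIV \<times> Act) \<times> Ht t. ?G (cons2 x))"
      by (rule sum.reindex_cong[OF inj2 refl refl])
    also have "\<dots> = (\<Sum>x\<in>(UNIV \<times> Act) \<times> Ht t. ?G (fst x # snd x))"
      by (simp only: c2)
    also have "\<dots> = (\<Sum>sa\<in>UNIV \<times> Act. \<Sum>ht\<in>Ht t. ?G (sa # ht))"
      by (rule trans[OF _ sum.cartesian_product[symmetric]]) (simp only: case_prod_unfold)
    also have "\<dots> \<le> (\<Sum>sa\<in>(UNIV::'s set) \<times> Act. \<Sum>ht\<in>Ht t. ?Q ht)"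
    proof (rule sum_mono)
      fix sa :: "'s \<times> 'act" assume sa: "sa \<in> UNIV \<times> Act"
      show "(\<Sum>ht\<in>Ht t. ?G (sa # ht)) \<le> (\<Sum>ht\<in>Ht t. ?Q ht)"
      proof (rule sum_mono)
        fix ht assume "ht \<in> Ht t"
        then show "?G (sa # ht) \<le> ?Q ht" by (rule step[OF sa])
      qed
    qed
    also have "\<dots> = of_nat (card ((UNIV::'s set) \<times> Act)) * (\<Sum>ht\<in>Ht t. ?Q ht)"
      by simp
    also have "(\<Sum>ht\<in>Ht t. ?Q ht) = (\<Sum>a1\<in>Act. \<Sum>ht\<in>Ht t. \<Sum>s2\<in>UNIV. mt a1 s2 ht)"
      by (rule sum.swap)
    also have "\<dots> = (\<Sum>a1\<in>Act. \<Sum>s2\<in>UNIV. \<Sum>ht\<in>Ht t. mt a1 s2 ht)"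
      by (rule sum.cong[OF refl]) (rule sum.swap)
    also have "\<dots> = (\<Sum>a1\<in>Act. \<Sum>s2\<in>UNIV. mterm (Lam a1 s2) s2 t)"
      by (simp add: mterm_def mt_def)
    finally show ?thesis by simp
  qed
  define cc where "cc = beta * of_nat (card ((UNIV::'s set) \<times> Act))"
  have sm: "summable (\<lambda>t. cc * (\<Sum>a1\<in>Act. \<Sum>s2\<in>UNIV. beta ^ t * mterm (Lam a1 s2) s2 t))"
    using Lam by (intro summable_mult summable_sum) (auto simp: M_iff)
  have "norm (beta ^ Suc t * mterm (glam l0 Lam) s (Suc t)) \<le> cc * (\<Sum>a1\<in>Act. \<Sum>s2\<in>UNIV. beta ^ t * mterm (Lam a1 s2) s2 t)" for t
  proof -
    have "beta ^ Suc t * mterm (glam l0 Lam) s (Suc t) \<le> beta ^ Suc t * (of_nat (card ((UNIV::'s set) \<times> Act)) * (\<Sum>a1\<in>Act. \<Sum>s2\<in>UNIV. mterm (Lam a1 s2) s2 t))"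
      by (rule mult_left_mono[OF key]) (use beta0 in simp)
    moreover have "mterm (glam l0 Lam) s (Suc t) \<ge> 0" by (rule mterm_nonneg) (rule gn)
    ultimately show ?thesis using beta0 unfolding cc_def
      by (simp add: sum_distrib_left algebra_simps)
  qed
  then have "summable (\<lambda>t. beta ^ Suc t * mterm (glam l0 Lam) s (Suc t))"
    by (intro summable_comparison_test[OF _ sm]) auto
  then have "summable (\<lambda>t. beta ^ t * mterm (glam l0 Lam) s t)"
    by (simp only: summable_Suc_iff[of "\<lambda>t. beta ^ t * mterm (glam l0 Lam) s t"])
  then show ?thesis using gn by (simp add: M_iff)
qed


lemma ereal_le_eps:
  assumes "\<And>e. e > 0 \<Longrightarrow> ereal (y - e) \<le> Z"
  shows "ereal y \<le> Z"
proof (rule dense_le)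
  fix w assume w: "w < ereal y"
  show "w \<le> Z"
  proof (cases w)
    case (real w')
    then have "ereal (y - (y - w')) \<le> Z" using w by (intro assms) auto
    then show ?thesis using real by simp
  next
    case PInf then show ?thesis using w by simp
  next
    case MInf then show ?thesis by simp
  qed
qed

abbreviation Phi where
  "Phi gam x s a0 l \<equiv> ereal (r x a0 s + (\<Sum>i\<in>UNIV. gam i * g i x a0 s + l i * (g i x a0 s - gbar i)))
       + ereal beta * (\<Sum>s'\<in>UNIV. ereal (Pr s s') * D (\<lambda>i. gam i + l i) (zeta x a0 s) s')"

lemma Phi_real:
  assumes x: "x \<in> X" and a0: "a0 \<in> Act"
  shows "Phi gam x s a0 l = ereal (F x a0 s l gam + beta * (\<Sum>s'\<in>UNIV. Pr s s' * Dr (\<lambda>i. gam i + l i) (zeta x a0 s) s'))"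
proof -
  have x': "zeta x a0 s \<in> X" by (rule zeta_X[OF x a0])
  have "(\<Sum>s'\<in>UNIV. ereal (Pr s s') * D (\<lambda>i. gam i + l i) (zeta x a0 s) s') =
        (\<Sum>s'\<in>UNIV. ereal (Pr s s' * Dr (\<lambda>i. gam i + l i) (zeta x a0 s) s'))"
    by (rule sum.cong[OF refl]) (simp add: D_real[OF x'])
  also have "\<dots> = ereal (\<Sum>s'\<in>UNIV. Pr s s' * Dr (\<lambda>i. gam i + l i) (zeta x a0 s) s')"
    by (rule sum_ereal)
  finally show ?thesis by (simp add: F_def)
qed

lemma main_ge:
  assumes x: "x \<in> X"
  shows "(SUP a0\<in>{a\<in>Act. p x a s \<ge> 0}. INF l\<in>{lam :: 'i \<Rightarrow> real. \<forall>i. lam i \<ge> 0}. Phi gam x s a0 l) \<le> D gam x s"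
  unfolding D_eq[of gam x s]
proof (rule INF_greatest, rule SUP_least)
  fix lam a0 assume lam: "lam \<in> M s" and a0: "a0 \<in> {a\<in>Act. p x a s \<ge> 0}"
  have a0A: "a0 \<in> Act" and a0p: "p x a0 s \<ge> 0" using a0 by auto
  define l0 where "l0 = lam [(s, a0)]"
  define x' where "x' = zeta x a0 s"
  define lam' where "lam' = shiftl lam (s, a0)"
  have x': "x' \<in> X" unfolding x'_def by (rule zeta_X[OF x a0A])
  have lam': "lam' \<in> M s'" for s' unfolding lam'_def by (rule M_shift[OF lam a0A])
  have l0: "l0 \<in> {lam. \<forall>i. lam i \<ge> 0}" using lam by (auto simp: M_iff l0_def)
  define Phr where "Phr = F x a0 s l0 gam + beta * (\<Sum>s'\<in>UNIV. Pr s s' * Dr (\<lambda>i. gam i + l0 i) x' s')"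
  have "Phi gam x s a0 l0 \<le> (SUP a\<in>P x. ereal (L a lam gam x s))"
  proof -
    have "ereal Phr \<le> (SUP a\<in>P x. ereal (L a lam gam x s))"
    proof (rule ereal_le_eps)
      fix e :: real assume e: "e > 0"
      have "\<exists>b. b \<in> P x' \<and> Dr (\<lambda>i. gam i + l0 i) x' s' - e < L b lam' (\<lambda>i. gam i + l0 i) x' s'" for s'
      proof -
        have "D (\<lambda>i. gam i + l0 i) x' s' \<le> (SUP b\<in>P x'. ereal (L b lam' (\<lambda>i. gam i + l0 i) x' s'))"
          unfolding D_eq by (rule INF_lower[OF lam'])
        moreover have "ereal (Dr (\<lambda>i. gam i + l0 i) x' s' - e) < D (\<lambda>i. gam i + l0 i) x' s'"
          using e by (simp add: D_real[OF x'])
        ultimately have "ereal (Dr (\<lambda>i. gam i + l0 i) x' s' - e) < (SUP b\<in>P x'. ereal (L b lam' (\<lambda>i. gam i + l0 i) x' s'))"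
          by order
        then show ?thesis by (auto simp: less_SUP_iff)
      qed
      then obtain b where b: "\<And>s'. b s' \<in> P x'"
        "\<And>s'. Dr (\<lambda>i. gam i + l0 i) x' s' - e < L (b s') lam' (\<lambda>i. gam i + l0 i) x' s'"
        by metis
      obtain c where c: "c \<in> P x" using P_nonempty[OF x] by blast
      define a where "a = glue s a0 b c"
      have a: "a \<in> P x" unfolding a_def by (rule glue_P[OF x a0A a0p _ c]) (use b(1) x'_def in auto)
      have as: "a [s] = a0" by (simp add: a_def)
      have Lrec: "L a lam gam x s = F x a0 s l0 gam + beta * (\<Sum>s'\<in>UNIV. Pr s s' * L (shift a s) lam' (\<lambda>i. gam i + l0 i) x' s')"
        using lagr_rec[OF a x lam, of gam] unfolding as l0_def x'_def lam'_def .
      have Lb: "L (shift a s) lam' (\<lambda>i. gam i + l0 i) x' s' = L (b s') lam' (\<lambda>i. gam i + l0 i) x' s'" for s'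
        by (rule lagr_cong_plan) (simp add: a_def shift_glue)
      have "(\<Sum>s'\<in>UNIV. Pr s s' * (Dr (\<lambda>i. gam i + l0 i) x' s' - e)) \<le> (\<Sum>s'\<in>UNIV. Pr s s' * L (shift a s) lam' (\<lambda>i. gam i + l0 i) x' s')"
        unfolding Lb by (intro sum_mono mult_left_mono less_imp_le[OF b(2)] less_imp_le[OF Pr_pos])
      moreover have "(\<Sum>s'\<in>UNIV. Pr s s' * (Dr (\<lambda>i. gam i + l0 i) x' s' - e)) = (\<Sum>s'\<in>UNIV. Pr s s' * Dr (\<lambda>i. gam i + l0 i) x' s') - e"
        by (simp add: right_diff_distrib sum_subtractf sum_distrib_right[symmetric] Pr_sum)
      ultimately have "(\<Sum>s'\<in>UNIV. Pr s s' * Dr (\<lambda>i. gam i + l0 i) x' s') - e \<le> (\<Sum>s'\<in>UNIV. Pr s s' * L (shift a s) lam' (\<lambda>i. gam i + l0 i) x' s')"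
        by simp
      then have "beta * ((\<Sum>s'\<in>UNIV. Pr s s' * Dr (\<lambda>i. gam i + l0 i) x' s') - e) \<le> beta * (\<Sum>s'\<in>UNIV. Pr s s' * L (shift a s) lam' (\<lambda>i. gam i + l0 i) x' s')"
        by (rule mult_left_mono) (use beta0 in simp)
      then have "Phr - beta * e \<le> L a lam gam x s"
        unfolding Lrec Phr_def by (simp add: right_diff_distrib)
      then have "Phr - e \<le> L a lam gam x s" using beta1 e by (smt (verit) mult_less_cancel_right1)
      then show "ereal (Phr - e) \<le> (SUP a\<in>P x. ereal (L a lam gam x s))"
        by (intro SUP_upper2[OF a]) simp
    qed
    then show ?thesis unfolding Phr_def x'_def using Phi_real[OF x a0A] by simp
  qed
  then show "(INF l\<in>{lam :: 'i \<Rightarrow> real. \<forall>i. lam i \<ge> 0}. Phi gam x s a0 l) \<le> (SUP a\<in>P x. ereal (L a lam gam x s))"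
    by (rule INF_lower2[OF l0])
qed


lemma main_le:
  assumes x: "x \<in> X"
  shows "D gam x s \<le> (SUP a0\<in>{a\<in>Act. p x a s \<ge> 0}. INF l\<in>{lam :: 'i \<Rightarrow> real. \<forall>i. lam i \<ge> 0}. Phi gam x s a0 l)"
    (is "_ \<le> ?R")
proof (rule dense_ge)
  fix w assume w: "?R < w"
  show "D gam x s \<le> w"
  proof (cases w)
    case PInf then show ?thesis by simp
  next
    case MInf then show ?thesis using w by simp
  next
    case (real z)
    obtain w' where w': "?R < w'" "w' < ereal z" using dense[of ?R "ereal z"] w real by blast
    then obtain zr where zr: "w' = ereal zr" by (cases w') auto
    define del where "del = z - zr"
    have del: "del > 0" using w' zr del_def by simp
    let ?A0 = "{a\<in>Act. p x a s \<ge> 0}"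
    let ?LS = "{lam :: 'i \<Rightarrow> real. \<forall>i. lam i \<ge> 0}"
    have ex1: "\<exists>l. l \<in> ?LS \<and> (a0 \<in> ?A0 \<longrightarrow> Phi gam x s a0 l < ereal zr)" for a0
    proof (cases "a0 \<in> ?A0")
      case True
      have "(INF l\<in>?LS. Phi gam x s a0 l) \<le> ?R" by (rule SUP_upper[OF True])
      then have "(INF l\<in>?LS. Phi gam x s a0 l) < ereal zr" using w' zr by simp
      then show ?thesis unfolding INF_less_iff by blast
    next
      case False then show ?thesis by (intro exI[of _ "\<lambda>_. 0"]) auto
    qed
    have "\<forall>a0. \<exists>l. l \<in> ?LS \<and> (a0 \<in> ?A0 \<longrightarrow> Phi gam x s a0 l < ereal zr)" using ex1 by blast
    from choice[OF this] obtain l0 where l0all: "\<forall>a0. l0 a0 \<in> ?LS \<and> (a0 \<in> ?A0 \<longrightarrow> Phi gam x s a0 (l0 a0) < ereal zr)"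
      by blast
    then have l0: "\<And>a0. l0 a0 \<in> ?LS" "\<And>a0. a0 \<in> ?A0 \<Longrightarrow> Phi gam x s a0 (l0 a0) < ereal zr"
      by blast+
    have ex2: "\<exists>lm. lm \<in> M (snd q) \<and> (fst q \<in> ?A0 \<longrightarrow>
        (SUP b\<in>P (zeta x (fst q) s). ereal (L b lm (\<lambda>i. gam i + l0 (fst q) i) (zeta x (fst q) s) (snd q))) < ereal (Dr (\<lambda>i. gam i + l0 (fst q) i) (zeta x (fst q) s) (snd q) + del))" for q
    proof (cases "fst q \<in> ?A0")
      case True
      then have x': "zeta x (fst q) s \<in> X" using zeta_X[OF x] by auto
      have "D (\<lambda>i. gam i + l0 (fst q) i) (zeta x (fst q) s) (snd q) < ereal (Dr (\<lambda>i. gam i + l0 (fst q) i) (zeta x (fst q) s) (snd q) + del)"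
        using del by (simp add: D_real[OF x'])
      then obtain lm where "lm \<in> M (snd q)" "(SUP b\<in>P (zeta x (fst q) s). ereal (L b lm (\<lambda>i. gam i + l0 (fst q) i) (zeta x (fst q) s) (snd q))) < ereal (Dr (\<lambda>i. gam i + l0 (fst q) i) (zeta x (fst q) s) (snd q) + del)"
        unfolding D_eq INF_less_iff by blast
      then show ?thesis by blast
    next
      case False then show ?thesis using zero_M by blast
    qed
    have "\<forall>q. \<exists>lm. lm \<in> M (snd q) \<and> (fst q \<in> ?A0 \<longrightarrow>
        (SUP b\<in>P (zeta x (fst q) s). ereal (L b lm (\<lambda>i. gam i + l0 (fst q) i) (zeta x (fst q) s) (snd q))) < ereal (Dr (\<lambda>i. gam i + l0 (fst q) i) (zeta x (fst q) s) (snd q) + del))"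
      using ex2 by blast
    from choice[OF this] obtain Lq where Lq: "\<forall>q. Lq q \<in> M (snd q) \<and> (fst q \<in> ?A0 \<longrightarrow>
        (SUP b\<in>P (zeta x (fst q) s). ereal (L b (Lq q) (\<lambda>i. gam i + l0 (fst q) i) (zeta x (fst q) s) (snd q))) < ereal (Dr (\<lambda>i. gam i + l0 (fst q) i) (zeta x (fst q) s) (snd q) + del))"
      by blast
    define Lam where "Lam a0 s' = Lq (a0, s')" for a0 s'
    have Lam: "\<And>a0 s'. Lam a0 s' \<in> M s'"
      "\<And>a0 s'. a0 \<in> ?A0 \<Longrightarrow> (SUP b\<in>P (zeta x a0 s). ereal (L b (Lam a0 s') (\<lambda>i. gam i + l0 a0 i) (zeta x a0 s) s'))
           < ereal (Dr (\<lambda>i. gam i + l0 a0 i) (zeta x a0 s) s' + del)"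
      unfolding Lam_def using Lq by auto
    define lam where "lam = glam l0 Lam"
    have lam: "lam \<in> M s" unfolding lam_def by (rule glam_M) (use l0(1) Lam(1) in auto)
    have "D gam x s \<le> (SUP a\<in>P x. ereal (L a lam gam x s))"
      unfolding D_eq by (rule INF_lower[OF lam])
    also have "\<dots> \<le> ereal z"
    proof (rule SUP_least)
      fix a assume a: "a \<in> P x"
      define a0 where "a0 = a [s]"
      have a0A: "a0 \<in> ?A0" using P_Act[OF a] P_p[OF a, of "[s]"] unfolding a0_def by simp
      then have a0Act: "a0 \<in> Act" by simp
      define x' where "x' = zeta x a0 s"
      have x': "x' \<in> X" unfolding x'_def by (rule zeta_X[OF x a0Act])
      have a': "shift a s \<in> P x'" unfolding x'_def a0_def by (rule shift_P[OF a x])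
      have lam0: "lam [(s, a0)] = l0 a0" by (simp add: lam_def)
      have Lrec: "L a lam gam x s = F x a0 s (l0 a0) gam +
          beta * (\<Sum>s'\<in>UNIV. Pr s s' * L (shift a s) (shiftl lam (s, a0)) (\<lambda>i. gam i + l0 a0 i) x' s')"
        using lagr_rec[OF a x lam, of gam] unfolding a0_def[symmetric] lam0 x'_def .
      have Lc: "L (shift a s) (shiftl lam (s, a0)) (\<lambda>i. gam i + l0 a0 i) x' s' =
          L (shift a s) (Lam a0 s') (\<lambda>i. gam i + l0 a0 i) x' s'" for s'
        by (rule lagr_cong_lam) (simp add: lam_def shiftl_def glam_Cons)
      have Lb: "L (shift a s) (Lam a0 s') (\<lambda>i. gam i + l0 a0 i) x' s' < Dr (\<lambda>i. gam i + l0 a0 i) x' s' + del" for s'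
      proof -
        have "ereal (L (shift a s) (Lam a0 s') (\<lambda>i. gam i + l0 a0 i) x' s') \<le>
            (SUP b\<in>P x'. ereal (L b (Lam a0 s') (\<lambda>i. gam i + l0 a0 i) x' s'))"
          by (rule SUP_upper[OF a'])
        also have "\<dots> < ereal (Dr (\<lambda>i. gam i + l0 a0 i) x' s' + del)"
          using Lam(2)[OF a0A, of s'] unfolding x'_def .
        finally show ?thesis by simp
      qed
      have "(\<Sum>s'\<in>UNIV. Pr s s' * L (shift a s) (shiftl lam (s, a0)) (\<lambda>i. gam i + l0 a0 i) x' s') \<le>
          (\<Sum>s'\<in>UNIV. Pr s s' * (Dr (\<lambda>i. gam i + l0 a0 i) x' s' + del))"
        unfolding Lc by (intro sum_mono mult_left_mono less_imp_le[OF Lb] less_imp_le[OF Pr_pos])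
      also have "\<dots> = (\<Sum>s'\<in>UNIV. Pr s s' * Dr (\<lambda>i. gam i + l0 a0 i) x' s') + del"
        by (simp add: distrib_left sum.distrib sum_distrib_right[symmetric] Pr_sum)
      finally have "beta * (\<Sum>s'\<in>UNIV. Pr s s' * L (shift a s) (shiftl lam (s, a0)) (\<lambda>i. gam i + l0 a0 i) x' s') \<le>
          beta * ((\<Sum>s'\<in>UNIV. Pr s s' * Dr (\<lambda>i. gam i + l0 a0 i) x' s') + del)"
        by (rule mult_left_mono) (use beta0 in simp)
      then have L1: "L a lam gam x s \<le> F x a0 s (l0 a0) gam + beta * (\<Sum>s'\<in>UNIV. Pr s s' * Dr (\<lambda>i. gam i + l0 a0 i) x' s') + beta * del"
        unfolding Lrec by (simp add: distrib_left)
      have "F x a0 s (l0 a0) gam + beta * (\<Sum>s'\<in>UNIV. Pr s s' * Dr (\<lambda>i. gam i + l0 a0 i) x' s') < zr"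
        using l0(2)[OF a0A] Phi_real[OF x a0Act, where gam=gam and l="l0 a0" and s=s] unfolding x'_def by simp
      moreover have "beta * del \<le> del" using beta1 del by simp
      ultimately have "L a lam gam x s \<le> z" using L1 del_def by linarith
      then show "ereal (L a lam gam x s) \<le> ereal z" by simp
    qed
    finally show ?thesis using real by simp
  qed
qed

lemma main:
  assumes x: "x \<in> X"
  shows "D gam x s = (SUP a0\<in>{a\<in>Act. p x a s \<ge> 0}. INF l\<in>{lam :: 'i \<Rightarrow> real. \<forall>i. lam i \<ge> 0}. Phi gam x s a0 l)"
  using main_le[OF x] main_ge[OF x] by (rule antisym)

end

theorem theorem3p3:
  fixes Pr :: "'s::finite \<Rightarrow> 's \<Rightarrow> real"
    and beta :: real
    and Act :: "'act set"
    and X :: "'x set"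
    and zeta :: "'x \<Rightarrow> 'act \<Rightarrow> 's \<Rightarrow> 'x"
    and p r :: "'x \<Rightarrow> 'act \<Rightarrow> 's \<Rightarrow> real"
    and g :: "'i::finite \<Rightarrow> 'x \<Rightarrow> 'act \<Rightarrow> 's \<Rightarrow> real"
    and gbar :: "'i \<Rightarrow> real"
    and gam :: "'i \<Rightarrow> real"
    and x :: 'x and s :: 's
  assumes Pr_pos: "\<And>s s'. Pr s s' > 0"
    and Pr_sum: "\<And>s. (\<Sum>s'\<in>UNIV. Pr s s') = 1"
    and Act_fin: "finite Act"
    and X_count: "countable X"
    and zeta_X: "\<And>x a s. x \<in> X \<Longrightarrow> a \<in> Act \<Longrightarrow> zeta x a s \<in> X"
    and beta: "0 < beta" "beta < 1"
    and r_bdd: "\<exists>B. \<forall>x\<in>X. \<forall>a\<in>Act. \<forall>s. \<bar>r x a s\<bar> \<le> B"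
    and g_bdd: "\<And>i. \<exists>B. \<forall>x\<in>X. \<forall>a\<in>Act. \<forall>s. \<bar>g i x a s\<bar> \<le> B"
    and feas: "\<And>x0 s0. x0 \<in> X \<Longrightarrow> \<exists>a. feasible Pr beta Act zeta p g gbar x0 s0 a"
    and x: "x \<in> X"
    and gam: "\<And>i. gam i \<ge> 0"
  shows "Dtil Pr beta Act zeta p r g gbar gam x s =
    (SUP a\<in>{a\<in>Act. p x a s \<ge> 0}. INF lam\<in>{lam :: 'i \<Rightarrow> real. \<forall>i. lam i \<ge> 0}.
       ereal (r x a s + (\<Sum>i\<in>UNIV. gam i * g i x a s + lam i * (g i x a s - gbar i)))
       + ereal beta * (\<Sum>s'\<in>UNIV. ereal (Pr s s') *
            Dtil Pr beta Act zeta p r g gbar (\<lambda>i. gam i + lam i) (zeta x a s) s'))"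
  proof -
  interpret dp Pr beta Act X zeta p r g gbar
    by unfold_locales (use Pr_pos Pr_sum Act_fin zeta_X beta r_bdd g_bdd feas in auto)
  show ?thesis by (rule main[OF x])
qed

end
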